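(* If $G$ is a connected subcubic graph of order $n\geq 6$, then $$C(G)\leq\begin{cases}\frac{7}{12}+\frac{12}{12n}, & \text{if } n\equiv 0 \pmod 4,\\[2pt] \frac{7}{12}+\frac{13}{12n}, & \text{if } n\equiv 1 \pmod 4,\\[2pt] \frac{7}{12}+\frac{14}{12n}, & \text{if } n\equiv 2 \pmod 4,\\[2pt] \frac{7}{12}+\frac{11}{12n}, & \text{if } n\equiv 3 \pmod 4.\end{cases}$$
   Context: All graphs are finite and simple. A graph is subcubic if its maximum degree is at most $3$. For a vertex $u$ of a graph $G$, $N_G(u)$ is its neighborhood, $d_G(u)$ its degree, and $m(G[N_G(u)])$ the number of edges of the subgraph induced by $N_G(u)$. The clustering coefficient of $u$ in $G$ is $C_u(G)=m(G[N_G(u)])/\binom{d_G(u)}{2}$ if $d_G(u)\geq 2$, and $C_u(G)=0$ otherwise. The clustering coefficient of $G$ is $C(G)=\frac{1}{n(G)}\sum_{u\in V(G)}C_u(G)$, where $n(G)$ is the order of $G$. *)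

theory Defs
  imports Main "HOL-Library.Disjoint_Sets" Complex_Main
begin

definition simple_graph :: "'a set \<Rightarrow> 'a set set \<Rightarrow> bool" where
  "simple_graph V E \<longleftrightarrow> finite V \<and> (\<forall>e\<in>E. e \<subseteq> V \<and> card e = 2)"

definition neighbors :: "'a set set \<Rightarrow> 'a \<Rightarrow> 'a set" where
  "neighbors E u = {v. {u, v} \<in> E}"

definition degree :: "'a set set \<Rightarrow> 'a \<Rightarrow> nat" where
  "degree E u = card (neighbors E u)"

definition subcubic :: "'a set \<Rightarrow> 'a set set \<Rightarrow> bool" where
  "subcubic V E \<longleftrightarrow> (\<forall>u\<in>V. degree E u \<le> 3)"

fun walk :: "'a set set \<Rightarrow> 'a list \<Rightarrow> bool" where
  "walk E [] = True"
| "walk E [x] = True"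
| "walk E (x # y # xs) = ({x, y} \<in> E \<and> walk E (y # xs))"

definition connected_graph :: "'a set \<Rightarrow> 'a set set \<Rightarrow> bool" where
  "connected_graph V E \<longleftrightarrow> V \<noteq> {} \<and>
     (\<forall>u\<in>V. \<forall>v\<in>V. \<exists>p. p \<noteq> [] \<and> hd p = u \<and> last p = v \<and> walk E p)"

definition induced_edges :: "'a set set \<Rightarrow> 'a set \<Rightarrow> nat" where
  "induced_edges E S = card {e\<in>E. e \<subseteq> S}"

definition local_clustering :: "'a set set \<Rightarrow> 'a \<Rightarrow> real" where
  "local_clustering E u =
     (if degree E u \<ge> 2
      then real (induced_edges E (neighbors E u)) / real (degree E u choose 2)
      else 0)"

definition clustering :: "'a set \<Rightarrow> 'a set set \<Rightarrow> real" where
  "clustering V E = (\<Sum>u\<in>V. local_clustering E u) / real (card V)"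

end

theory Submission
  imports Defs
begin


lemma edge_props:
  assumes "simple_graph V E" "{u,v} \<in> E"
  shows "u \<noteq> v" "u \<in> V" "v \<in> V"
proof -
  have "{u,v} \<subseteq> V" "card {u,v} = 2" using assms unfolding simple_graph_def by auto
  then show "u \<noteq> v" "u \<in> V" "v \<in> V" by (auto simp: card_insert_if split: if_splits)
qed

lemma nb_sym: "v \<in> neighbors E u \<longleftrightarrow> u \<in> neighbors E v"
  by (simp add: neighbors_def insert_commute)

lemma nb_sub: "simple_graph V E \<Longrightarrow> neighbors E u \<subseteq> V"
proof
  fix v assume sg: "simple_graph V E" and "v \<in> neighbors E u"
  then have "{u,v} \<in> E" by (simp add: neighbors_def)
  then show "v \<in> V" using edge_props(3)[OF sg] by simp
qed

lemma nb_fin: "simple_graph V E \<Longrightarrow> finite (neighbors E u)"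
  using nb_sub[of V E u] unfolding simple_graph_def using finite_subset by blast

lemma nb_noloop: "simple_graph V E \<Longrightarrow> u \<notin> neighbors E u"
proof
  assume sg: "simple_graph V E" and "u \<in> neighbors E u"
  then have "{u,u} \<in> E" by (simp add: neighbors_def)
  then show False using edge_props(1)[OF sg, of u u] by simp
qed

lemma E_fin: "simple_graph V E \<Longrightarrow> finite E"
proof -
  assume a: "simple_graph V E"
  then have "E \<subseteq> Pow V" unfolding simple_graph_def by auto
  then show ?thesis using a unfolding simple_graph_def by (meson finite_Pow_iff finite_subset)
qed

lemma sg_sub: "simple_graph V E \<Longrightarrow> E' \<subseteq> E \<Longrightarrow> simple_graph V E'"
  unfolding simple_graph_def by auto

lemma conn_walk:
  assumes "connected_graph V E" "u \<in> V" "v \<in> V"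
  shows "\<exists>p. p \<noteq> [] \<and> hd p = u \<and> last p = v \<and> walk E p"
  using assms unfolding connected_graph_def by blast

lemma walk_closed:
  assumes "walk E p" "p \<noteq> []" "hd p \<in> S" "\<forall>v\<in>S. neighbors E v \<subseteq> S"
  shows "last p \<in> S"
  using assms
proof (induction E p rule: walk.induct)
  case (3 E x y xs)
  then have "y \<in> neighbors E x" by (simp add: neighbors_def)
  then have "y \<in> S" using 3 by auto
  then show ?case using 3 by auto
qed auto

lemma conn_closed:
  assumes "connected_graph V E" "x \<in> S" "x \<in> V" "\<forall>v\<in>S. neighbors E v \<subseteq> S"
  shows "V \<subseteq> S"
proof
  fix v assume "v \<in> V"
  then obtain p where "p \<noteq> []" "hd p = x" "last p = v" "walk E p"
    using assms unfolding connected_graph_def by blast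
  then show "v \<in> S" using walk_closed[of E p S] assms by auto
qed

lemma walk_remove:
  assumes "walk E p" "p \<noteq> []" "{x,z} \<in> E - {{x,y}}" "{z,y} \<in> E - {{x,y}}"
  shows "\<exists>q. q \<noteq> [] \<and> hd q = hd p \<and> last q = last p \<and> walk (E - {{x,y}}) q"
  using assms
proof (induction E p rule: walk.induct)
  case (1 E) then show ?case by simp
next
  case (2 E a) then show ?case by (intro exI[of _ "[a]"]) simp
next
  case (3 E a b xs)
  then obtain q where q: "q \<noteq> []" "hd q = b" "last q = last (b # xs)" "walk (E - {{x,y}}) q"
    by auto
  obtain q' where q': "q = b # q'" using q by (cases q) auto
  show ?case
  proof (cases "{a,b} = {x,y}")
    case True
    have c1: "{z,x} = {x,z}" "{y,z} = {z,y}" by (auto simp: insert_commute)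
    from True have "(a = x \<and> b = y) \<or> (a = y \<and> b = x)" by (simp add: doubleton_eq_iff)
    then have "{a,z} \<in> E - {{x,y}} \<and> {z,b} \<in> E - {{x,y}}"
      using "3.prems"(3,4) c1 by (elim disjE) simp_all
    then show ?thesis using q q' by (intro exI[of _ "a # z # q"]) simp
  next
    case False
    then show ?thesis using q q' "3.prems"(1) by (intro exI[of _ "a # q"]) simp
  qed
qed

lemma conn_remove:
  assumes "connected_graph V E" "{x,z} \<in> E - {{x,y}}" "{z,y} \<in> E - {{x,y}}"
  shows "connected_graph V (E - {{x,y}})"
proof -
  { fix u v assume "u \<in> V" "v \<in> V"
    then obtain p where "p \<noteq> []" "hd p = u" "last p = v" "walk E p"
      using assms(1) unfolding connected_graph_def by blast
    then have "\<exists>q. q \<noteq> [] \<and> hd q = u \<and> last q = v \<and> walk (E - {{x,y}}) q"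
      using walk_remove[of E p x z y] assms(2,3) by auto }
  then show ?thesis using assms(1) unfolding connected_graph_def by blast
qed

lemma conn_edges:
  assumes sg: "simple_graph V E" and c: "connected_graph V E"
  shows "card V \<le> Suc (card E)"
proof -
  have "V \<noteq> {}" using c by (simp add: connected_graph_def)
  then obtain r where r: "r \<in> V" by blast
  define PP where "PP v k \<longleftrightarrow> (\<exists>p. walk E p \<and> p \<noteq> [] \<and> hd p = v \<and> last p = r \<and> length p = Suc k)" for v k
  define dd where "dd v = (LEAST k. PP v k)" for v
  have ex: "\<exists>k. PP v k" if vV: "v \<in> V" for v
  proof -
    obtain p where "p \<noteq> []" "hd p = v" "last p = r" "walk E p"
      using conn_walk[OF c vV r] by blast
    then have "PP v (length p - 1)" unfolding PP_def by (intro exI[of _ p]) auto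
    then show ?thesis by blast
  qed
  have par: "\<exists>u. {v,u} \<in> E \<and> dd u < dd v" if "v \<in> V" "v \<noteq> r" for v
  proof -
    have "PP v (dd v)" unfolding dd_def using ex[OF that(1)] by (rule LeastI_ex)
    then obtain p where p: "walk E p" "p \<noteq> []" "hd p = v" "last p = r" "length p = Suc (dd v)"
      unfolding PP_def by blast
    show ?thesis
    proof (cases p)
      case Nil then show ?thesis using p by auto
    next
      case (Cons a q)
      show ?thesis
      proof (cases q)
        case Nil then show ?thesis using p Cons that by auto
      next
        case (Cons b q')
        have e: "{v,b} \<in> E" and w: "walk E (b # q')" using p \<open>p = a # q\<close> Cons by auto
        have "PP b (length q')" unfolding PP_def using w p \<open>p = a # q\<close> Cons
          by (intro exI[of _ "b # q'"]) auto
        then have "dd b \<le> length q'" unfolding dd_def by (rule Least_le)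
        moreover have "dd v = Suc (length q')" using p \<open>p = a # q\<close> Cons by auto
        ultimately show ?thesis using e by (intro exI[of _ b]) auto
      qed
    qed
  qed
  define pa where "pa v = (SOME u. {v,u} \<in> E \<and> dd u < dd v)" for v
  have pa: "{v, pa v} \<in> E \<and> dd (pa v) < dd v" if vr: "v \<in> V - {r}" for v
  proof -
    have "\<exists>u. {v,u} \<in> E \<and> dd u < dd v" using par vr by blast
    then show ?thesis unfolding pa_def by (rule someI_ex)
  qed
  have inj: "inj_on (\<lambda>v. {v, pa v}) (V - {r})"
  proof (rule inj_onI)
    fix v w assume vw: "v \<in> V - {r}" "w \<in> V - {r}" "{v, pa v} = {w, pa w}"
    show "v = w"
    proof (rule ccontr)
      assume "v \<noteq> w"
      then have h1: "v = pa w" and h2: "w = pa v" using vw(3) by (auto simp: doubleton_eq_iff)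
      have "dd w < dd v" using pa[OF vw(1)] h2 by simp
      moreover have "dd v < dd w" using pa[OF vw(2)] h1 by simp
      ultimately show False by simp
    qed
  qed
  have "(\<lambda>v. {v, pa v}) ` (V - {r}) \<subseteq> E" using pa by auto
  then have "card (V - {r}) \<le> card E" using card_inj_on_le[OF inj] E_fin[OF sg] by blast
  then show ?thesis using r sg unfolding simple_graph_def by auto
qed



definition tv :: "'a set set \<Rightarrow> 'a \<Rightarrow> nat" where
  "tv E u = induced_edges E (neighbors E u)"

lemma nb_remove: "neighbors (E - {{x,y}}) v =
   neighbors E v - (if v = x then {y} else {}) - (if v = y then {x} else {})"
  unfolding neighbors_def by (auto simp: doubleton_eq_iff)

lemma tv_end:
  assumes sg: "simple_graph V E" and e: "{x,y} \<in> E" and cn: "neighbors E x \<inter> neighbors E y = {z}"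
  shows "tv E x = Suc (tv (E - {{x,y}}) x)"
proof -
  have xy: "x \<noteq> y" using edge_props[OF sg e] by auto
  have N: "neighbors (E - {{x,y}}) x = neighbors E x - {y}" using xy by (simp add: nb_remove)
  have zx: "z \<in> neighbors E x" and zy: "z \<in> neighbors E y" using cn by auto
  have yz: "{y,z} \<in> E" using zy by (simp add: neighbors_def)
  have yx: "y \<in> neighbors E x" using e by (simp add: neighbors_def)
  let ?A = "{f \<in> E. f \<subseteq> neighbors E x}"
  let ?B = "{f \<in> E - {{x,y}}. f \<subseteq> neighbors E x - {y}}"
  have eq: "?A = insert {y,z} ?B"
  proof
    show "?A \<subseteq> insert {y,z} ?B"
    proof
      fix f assume f: "f \<in> ?A"
      show "f \<in> insert {y,z} ?B"
      proof (cases "y \<in> f")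
        case False
        then show ?thesis using f by auto
      next
        case True
        have "card f = 2" using f sg unfolding simple_graph_def by auto
        then obtain a b where ab: "f = {a,b}" "a \<noteq> b" by (meson card_2_iff)
        obtain w where w: "f = {y,w}" using True ab by auto
        have "w \<in> neighbors E x" using w f by auto
        moreover have "w \<in> neighbors E y" using w f by (simp add: neighbors_def)
        ultimately have "w = z" using cn by auto
        then show ?thesis using w by auto
      qed
    qed
  next
    show "insert {y,z} ?B \<subseteq> ?A" using yz zx yx by auto
  qed
  have nin: "{y,z} \<notin> ?B" by auto
  have fin: "finite ?B" using E_fin[OF sg] by auto
  show ?thesis unfolding tv_def induced_edges_def N using eq nin fin by simp
qed

lemma tv_mid:
  assumes sg: "simple_graph V E" and e: "{x,y} \<in> E" and cn: "neighbors E x \<inter> neighbors E y = {z}"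
  shows "tv E z = Suc (tv (E - {{x,y}}) z)"
proof -
  have zx: "z \<in> neighbors E x" and zy: "z \<in> neighbors E y" using cn by auto
  have "z \<noteq> x" "z \<noteq> y" using zx zy nb_noloop[OF sg] by auto
  then have N: "neighbors (E - {{x,y}}) z = neighbors E z" by (simp add: nb_remove)
  have sub: "{x,y} \<subseteq> neighbors E z" using zx zy nb_sym by fast
  have "{f \<in> E. f \<subseteq> neighbors E z} = insert {x,y} {f \<in> E - {{x,y}}. f \<subseteq> neighbors E z}"
    using sub e by auto
  moreover have "finite {f \<in> E - {{x,y}}. f \<subseteq> neighbors E z}" using E_fin[OF sg] by auto
  ultimately show ?thesis unfolding tv_def induced_edges_def N by simp
qed

lemma tv_other:
  assumes sg: "simple_graph V E" and cn: "neighbors E x \<inter> neighbors E y = {z}"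
    and v: "v \<noteq> x" "v \<noteq> y" "v \<noteq> z"
  shows "tv E v = tv (E - {{x,y}}) v"
proof -
  have N: "neighbors (E - {{x,y}}) v = neighbors E v" using v by (simp add: nb_remove)
  have "\<not> {x,y} \<subseteq> neighbors E v"
  proof
    assume "{x,y} \<subseteq> neighbors E v"
    then have "v \<in> neighbors E x \<inter> neighbors E y" using nb_sym by fast
    then show False using cn v by auto
  qed
  then have "{f \<in> E. f \<subseteq> neighbors E v} = {f \<in> E - {{x,y}}. f \<subseteq> neighbors E v}" by auto
  then show ?thesis unfolding tv_def induced_edges_def N by simp
qed

lemma tsum_remove:
  assumes sg: "simple_graph V E" and e: "{x,y} \<in> E" and cn: "neighbors E x \<inter> neighbors E y = {z}"
  shows "(\<Sum>v\<in>V. tv E v) = (\<Sum>v\<in>V. tv (E - {{x,y}}) v) + 3"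
proof -
  have xy: "x \<noteq> y" "x \<in> V" "y \<in> V" using edge_props[OF sg e] by auto
  have zx: "z \<in> neighbors E x" and zy: "z \<in> neighbors E y" using cn by auto
  have z: "z \<noteq> x" "z \<noteq> y" "z \<in> V" using zx zy nb_noloop[OF sg] nb_sub[OF sg] by auto
  have cn': "neighbors E y \<inter> neighbors E x = {z}" using cn by auto
  have e': "{y,x} \<in> E" using e by (simp add: insert_commute)
  have ty: "tv E y = Suc (tv (E - {{x,y}}) y)"
    using tv_end[OF sg e' cn'] by (simp add: insert_commute)
  have pt: "tv E v = tv (E - {{x,y}}) v + (if v \<in> {x,y,z} then 1 else 0)" for v
    using tv_end[OF sg e cn] ty tv_mid[OF sg e cn] tv_other[OF sg cn, of v] by auto
  have "(\<Sum>v\<in>V. tv E v) = (\<Sum>v\<in>V. tv (E - {{x,y}}) v) + (\<Sum>v\<in>V. (if v \<in> {x,y,z} then 1 else 0))"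
    by (simp add: pt sum.distrib)
  also have "(\<Sum>v\<in>V. (if v \<in> {x,y,z} then 1 else 0)) = card {v \<in> V. v \<in> {x,y,z}}"
    using sg unfolding simple_graph_def by (simp add: sum.inter_filter[symmetric])
  also have "{v \<in> V. v \<in> {x,y,z}} = {x,y,z}" using xy z by auto
  also have "card {x,y,z} = (3::nat)" using xy z by auto
  finally show ?thesis .
qed



lemma nb_mono: "E' \<subseteq> E \<Longrightarrow> neighbors E' u \<subseteq> neighbors E u"
  unfolding neighbors_def by auto

lemma nb_full:
  assumes sg: "simple_graph V E" and sc: "subcubic V E" and u: "u \<in> V"
    and abc: "a \<in> neighbors E u" "b \<in> neighbors E u" "c \<in> neighbors E u"
    and d: "a \<noteq> b" "a \<noteq> c" "b \<noteq> c"
  shows "neighbors E u \<subseteq> {a,b,c}"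
proof -
  have "card {a,b,c} = 3" using d by auto
  moreover have "card (neighbors E u) \<le> 3" using sc u unfolding subcubic_def degree_def by auto
  moreover have "{a,b,c} \<subseteq> neighbors E u" using abc by auto
  ultimately have "{a,b,c} = neighbors E u" using card_seteq[OF nb_fin[OF sg]] by (metis)
  then show ?thesis by simp
qed

lemma triangle_good:
  assumes sg: "simple_graph V E" and sc: "subcubic V E" and c: "connected_graph V E"
    and n: "card V \<ge> 5" and sub: "E' \<subseteq> E"
    and t1: "{x,y} \<in> E'" and t2: "{y,z} \<in> E'" and t3: "{x,z} \<in> E'"
  shows "\<exists>a b c. {a,b} \<in> E' \<and> neighbors E' a \<inter> neighbors E' b = {c}"
proof (rule ccontr)
  assume nex: "\<not> ?thesis"
  have sg': "simple_graph V E'" using sg_sub[OF sg sub] .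
  have d: "x \<noteq> y" "y \<noteq> z" "x \<noteq> z" "x \<in> V" "y \<in> V" "z \<in> V"
    using edge_props[OF sg' t1] edge_props[OF sg' t2] edge_props[OF sg' t3] by auto
  have zxy: "z \<in> neighbors E' x \<inter> neighbors E' y" using t2 t3
    by (auto simp: neighbors_def insert_commute)
  have "neighbors E' x \<inter> neighbors E' y \<noteq> {z}" using nex t1 by blast
  then obtain w where w: "w \<in> neighbors E' x" "w \<in> neighbors E' y" "w \<noteq> z" using zxy by blast
  have yxz: "y \<in> neighbors E' x \<inter> neighbors E' z" using t1 t2
    by (auto simp: neighbors_def insert_commute)
  have "neighbors E' x \<inter> neighbors E' z \<noteq> {y}" using nex t3 by blast
  then obtain w' where w': "w' \<in> neighbors E' x" "w' \<in> neighbors E' z" "w' \<noteq> y" using yxz by blast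
  have wd: "w \<noteq> x" "w \<noteq> y" "w' \<noteq> x" "w' \<noteq> z"
    using w w' nb_noloop[OF sg'] by metis+
  have NE: "neighbors E' u \<subseteq> neighbors E u" for u using nb_mono[OF sub] .
  have ww: "w' = w"
  proof (rule ccontr)
    assume "w' \<noteq> w"
    then have "card {y,z,w,w'} = 4" using d wd w' w by auto
    moreover have "{y,z,w,w'} \<subseteq> neighbors E x" using NE w w' zxy yxz by blast
    ultimately have "4 \<le> card (neighbors E x)" by (metis card_mono nb_fin[OF sg])
    moreover have "card (neighbors E x) \<le> 3" using sc d unfolding subcubic_def degree_def by auto
    ultimately show False by simp
  qed
  have wV: "w \<in> V" using w nb_sub[OF sg'] by auto
  have xs: "{y,z,w} \<subseteq> neighbors E x" using NE w zxy yxz by blast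
  have ys: "{x,z,w} \<subseteq> neighbors E y" using NE w zxy yxz nb_sym by fast
  have zs: "{x,y,w} \<subseteq> neighbors E z" using NE w' ww zxy yxz nb_sym by fast
  have ws: "{x,y,z} \<subseteq> neighbors E w" using NE w w' ww zxy nb_sym by fast
  let ?S = "{x,y,z,w}"
  have cl: "\<forall>v\<in>?S. neighbors E v \<subseteq> ?S"
  proof -
    have "neighbors E x \<subseteq> {y,z,w}" using xs d wd w(3) by (intro nb_full[OF sg sc d(4)]) auto
    moreover have "neighbors E y \<subseteq> {x,z,w}" using ys d wd w(3) by (intro nb_full[OF sg sc d(5)]) auto
    moreover have "neighbors E z \<subseteq> {x,y,w}" using zs d wd w(3) by (intro nb_full[OF sg sc d(6)]) auto
    moreover have "neighbors E w \<subseteq> {x,y,z}" using ws d wd w(3) by (intro nb_full[OF sg sc wV]) auto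
    ultimately show ?thesis by auto
  qed
  have "V \<subseteq> ?S" using conn_closed[OF c _ d(4) cl] by simp
  then have "card V \<le> card ?S" by (simp add: card_mono)
  also have "card ?S \<le> 4" by (simp add: card_insert_if)
  finally show False using n by simp
qed

lemma tri_bound:
  assumes sg: "simple_graph V E" and sc: "subcubic V E" and c: "connected_graph V E"
    and n: "card V \<ge> 5"
  shows "E' \<subseteq> E \<Longrightarrow> connected_graph V E' \<Longrightarrow> 3 * card V + (\<Sum>v\<in>V. tv E' v) \<le> 3 * card E' + 3"
proof (induction "card E'" arbitrary: E' rule: less_induct)
  case less
  have sg': "simple_graph V E'" using sg_sub[OF sg less.prems(1)] .
  have finE': "finite E'" using E_fin[OF sg'] .
  have finV: "finite V" using sg unfolding simple_graph_def by auto
  show ?case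
  proof (cases "(\<Sum>v\<in>V. tv E' v) = 0")
    case True
    have "card V \<le> Suc (card E')" using conn_edges[OF sg' less.prems(2)] .
    then show ?thesis using True by linarith
  next
    case False
    have "\<exists>u\<in>V. tv E' u \<noteq> 0" using False by (metis sum.neutral)
    then obtain u where u: "u \<in> V" "tv E' u \<noteq> 0" by blast
    then have "{f \<in> E'. f \<subseteq> neighbors E' u} \<noteq> {}"
      unfolding tv_def induced_edges_def by (metis card.empty)
    then obtain f where f: "f \<in> E'" "f \<subseteq> neighbors E' u" by blast
    have "card f = 2" using f sg' unfolding simple_graph_def by auto
    then obtain a b where ab: "f = {a,b}" "a \<noteq> b" by (meson card_2_iff)
    have e1: "{u,a} \<in> E'" "{u,b} \<in> E'" using f ab by (auto simp: neighbors_def)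
    obtain p q r where pq: "{p,q} \<in> E'" and cn: "neighbors E' p \<inter> neighbors E' q = {r}"
      using triangle_good[OF sg sc c n less.prems(1) e1(1) _ e1(2)] f ab by blast
    let ?E = "E' - {{p,q}}"
    have rp: "r \<in> neighbors E' p" and rq: "r \<in> neighbors E' q" using cn by auto
    have rd: "r \<noteq> p" "r \<noteq> q" using rp rq nb_noloop[OF sg'] by metis+
    have pr: "{p,r} \<in> E' - {{p,q}}" using rp rd by (auto simp: neighbors_def doubleton_eq_iff)
    have rq': "{r,q} \<in> E' - {{p,q}}" using rq rd
      by (auto simp: neighbors_def doubleton_eq_iff insert_commute)
    have conn: "connected_graph V ?E" using conn_remove[OF less.prems(2) pr rq'] .
    have lt: "card ?E < card E'" using pq finE' by (meson card_Diff1_less)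
    have IH: "3 * card V + (\<Sum>v\<in>V. tv ?E v) \<le> 3 * card ?E + 3"
      using less.hyps[OF lt _ conn] less.prems(1) by auto
    have T: "(\<Sum>v\<in>V. tv E' v) = (\<Sum>v\<in>V. tv ?E v) + 3" using tsum_remove[OF sg' pq cn] .
    have "card ?E = card E' - 1" using pq finE' by simp
    moreover have "card E' \<ge> 1" using pq finE' by (metis One_nat_def Suc_leI card_gt_0_iff empty_iff)
    ultimately show ?thesis using IH T by linarith
  qed
qed



lemma handshake:
  assumes sg: "simple_graph V E"
  shows "(\<Sum>u\<in>V. degree E u) = 2 * card E"
proof -
  have finV: "finite V" using sg unfolding simple_graph_def by auto
  have finE: "finite E" using E_fin[OF sg] .
  define D where "D e = {(a,b). e = {a,b}}" for e :: "'a set"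
  have s1: "(\<Sum>u\<in>V. degree E u) = card (SIGMA u:V. neighbors E u)"
    unfolding degree_def using finV nb_fin[OF sg] by (simp add: card_SigmaI)
  have s2: "(SIGMA u:V. neighbors E u) = (\<Union>e\<in>E. D e)"
  proof (intro set_eqI iffI)
    fix pr assume "pr \<in> (SIGMA u:V. neighbors E u)"
    then obtain a b where "pr = (a,b)" "{a,b} \<in> E" by (auto simp: neighbors_def)
    then show "pr \<in> (\<Union>e\<in>E. D e)" unfolding D_def by auto
  next
    fix pr assume "pr \<in> (\<Union>e\<in>E. D e)"
    then obtain a b where ab: "pr = (a,b)" "{a,b} \<in> E" unfolding D_def by auto
    then have "a \<in> V" using edge_props[OF sg] by auto
    then show "pr \<in> (SIGMA u:V. neighbors E u)" using ab by (auto simp: neighbors_def)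
  qed
  have cD: "card (D e) = 2" if e: "e \<in> E" for e
  proof -
    have "card e = 2" using e sg unfolding simple_graph_def by auto
    then obtain a b where ab: "e = {a,b}" "a \<noteq> b" by (meson card_2_iff)
    have "D e = {(a,b),(b,a)}" unfolding D_def ab by (auto simp: doubleton_eq_iff)
    then show ?thesis using ab by simp
  qed
  have fD: "finite (D e)" if "e \<in> E" for e using cD[OF that] by (intro card_ge_0_finite) simp
  have disj: "\<forall>i\<in>E. \<forall>j\<in>E. i \<noteq> j \<longrightarrow> D i \<inter> D j = {}" unfolding D_def by auto
  have "card (\<Union>e\<in>E. D e) = (\<Sum>e\<in>E. card (D e))"
    using card_UN_disjoint[OF finE _ disj] fD by blast
  also have "\<dots> = 2 * card E" using cD by simp
  finally show ?thesis using s1 s2 by simp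
qed

lemma tv_le:
  assumes sg: "simple_graph V E"
  shows "tv E u \<le> degree E u choose 2"
proof -
  have fin: "finite (neighbors E u)" using nb_fin[OF sg] .
  have "{f \<in> E. f \<subseteq> neighbors E u} \<subseteq> {B. B \<subseteq> neighbors E u \<and> card B = 2}"
    using sg unfolding simple_graph_def by auto
  then have "card {f \<in> E. f \<subseteq> neighbors E u} \<le> card {B. B \<subseteq> neighbors E u \<and> card B = 2}"
    using fin by (intro card_mono) auto
  also have "\<dots> = degree E u choose 2" unfolding degree_def using n_subsets[OF fin] by simp
  finally show ?thesis unfolding tv_def induced_edges_def .
qed

lemma deg2_tri:
  assumes sg: "simple_graph V E" and N: "neighbors E u = {a,b}" and ab: "a \<noteq> b" and t: "tv E u = 1"
  shows "{a,b} \<in> E"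
proof -
  have "{f \<in> E. f \<subseteq> {a,b}} \<noteq> {}" using t N unfolding tv_def induced_edges_def by (metis card.empty zero_neq_one)
  then obtain f where f: "f \<in> E" "f \<subseteq> {a,b}" by blast
  have "card f = 2" using f sg unfolding simple_graph_def by auto
  then have "f = {a,b}" using f(2) ab by (metis card_2_iff card_subset_eq finite.emptyI finite.insertI)
  then show ?thesis using f by simp
qed


lemma A_has_deg3:
  assumes sg: "simple_graph V E" and sc: "subcubic V E" and c: "connected_graph V E"
    and n: "card V \<ge> 6" and u: "u \<in> V" and d: "degree E u = 2" and t: "tv E u = 1"
  shows "\<exists>x\<in>neighbors E u. degree E x = 3"
proof (rule ccontr)
  assume no: "\<not> ?thesis"
  have "card (neighbors E u) = 2" using d unfolding degree_def .
  then obtain a b where N: "neighbors E u = {a,b}" and ab: "a \<noteq> b" by (meson card_2_iff)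
  have e: "{a,b} \<in> E" using deg2_tri[OF sg N ab t] .
  have aV: "a \<in> V" and bV: "b \<in> V" using N nb_sub[OF sg] by auto
  have ua: "u \<noteq> a" "u \<noteq> b" using N nb_noloop[OF sg] by auto
  have Na: "neighbors E a \<subseteq> {u,b}"
  proof -
    have sub: "{u,b} \<subseteq> neighbors E a" using N e by (auto simp: neighbors_def insert_commute)
    have "degree E a \<noteq> 3" using no N by auto
    then have "card (neighbors E a) \<le> 2" using sc aV unfolding subcubic_def degree_def by fastforce
    moreover have "card {u,b} = 2" using ua by simp
    ultimately have "{u,b} = neighbors E a" using card_seteq[OF nb_fin[OF sg] sub] by simp
    then show ?thesis by simp
  qed
  have Nb: "neighbors E b \<subseteq> {u,a}"
  proof -
    have sub: "{u,a} \<subseteq> neighbors E b" using N e by (auto simp: neighbors_def insert_commute)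
    have "degree E b \<noteq> 3" using no N by auto
    then have "card (neighbors E b) \<le> 2" using sc bV unfolding subcubic_def degree_def by fastforce
    moreover have "card {u,a} = 2" using ua by simp
    ultimately have "{u,a} = neighbors E b" using card_seteq[OF nb_fin[OF sg] sub] by simp
    then show ?thesis by simp
  qed
  have cl: "\<forall>v\<in>{u,a,b}. neighbors E v \<subseteq> {u,a,b}" using N Na Nb by auto
  have "V \<subseteq> {u,a,b}" using conn_closed[OF c _ u cl] by simp
  then have "card V \<le> card {u,a,b}" by (simp add: card_mono)
  also have "card {u,a,b} \<le> 3" by (simp add: card_insert_if)
  finally show False using n by simp
qed

lemma nbA_bound:
  assumes sg: "simple_graph V E"
    and A: "A = {u\<in>V. degree E u = 2 \<and> tv E u = 1}"
  shows "card (neighbors E x \<inter> A) \<le> 2 * tv E x"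
proof -
  let ?F = "{f \<in> E. f \<subseteq> neighbors E x}"
  have sub: "neighbors E x \<inter> A \<subseteq> \<Union>?F"
  proof
    fix u assume uu: "u \<in> neighbors E x \<inter> A"
    then have d: "card (neighbors E u) = 2" and t: "tv E u = 1" using A unfolding degree_def by auto
    have xu: "x \<in> neighbors E u" using uu nb_sym by fast
    obtain a b where ab: "neighbors E u = {a,b}" "a \<noteq> b" using d by (meson card_2_iff)
    obtain w where N: "neighbors E u = {x,w}" and xw: "x \<noteq> w"
      using ab xu by auto
    have e: "{x,w} \<in> E" using deg2_tri[OF sg N xw t] .
    have "{u,w} \<in> E" using N by (auto simp: neighbors_def)
    moreover have "{u,w} \<subseteq> neighbors E x" using uu e by (auto simp: neighbors_def)
    ultimately show "u \<in> \<Union>?F" by blast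
  qed
  have finF: "finite ?F" using E_fin[OF sg] by simp
  have fin2: "\<forall>f\<in>?F. finite f \<and> card f = 2" using sg unfolding simple_graph_def
    by (auto intro: card_ge_0_finite)
  have "card (neighbors E x \<inter> A) \<le> card (\<Union>?F)"
    using sub fin2 finF by (intro card_mono) auto
  also have "\<dots> \<le> sum card ?F" using fin2 by (intro card_Union_le_sum_card)
  also have "\<dots> = 2 * card ?F" using fin2 by simp
  finally show ?thesis unfolding tv_def induced_edges_def .
qed

lemma A_bound:
  assumes sg: "simple_graph V E" and sc: "subcubic V E" and c: "connected_graph V E"
    and n: "card V \<ge> 6"
    and A: "A = {u\<in>V. degree E u = 2 \<and> tv E u = 1}"
    and D3: "D3 = {x\<in>V. degree E x = 3}"
  shows "card A \<le> 2 * (\<Sum>x\<in>D3. tv E x)"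
proof -
  have finV: "finite V" using sg unfolding simple_graph_def by auto
  have finA: "finite A" "finite D3" using finV A D3 by auto
  have "card A = (\<Sum>u\<in>A. 1)" by simp
  also have "\<dots> \<le> (\<Sum>u\<in>A. card (neighbors E u \<inter> D3))"
  proof (rule sum_mono)
    fix u assume "u \<in> A"
    then obtain x where "x \<in> neighbors E u" "degree E x = 3"
      using A_has_deg3[OF sg sc c n] A by blast
    moreover have "x \<in> V" using calculation nb_sub[OF sg] by auto
    ultimately have "x \<in> neighbors E u \<inter> D3" using D3 by auto
    moreover have "finite (neighbors E u \<inter> D3)" using nb_fin[OF sg] by simp
    ultimately show "1 \<le> card (neighbors E u \<inter> D3)"
      by (metis One_nat_def Suc_leI card_gt_0_iff empty_iff)
  qed
  also have "\<dots> = (\<Sum>u\<in>A. \<Sum>x\<in>D3. if x \<in> neighbors E u then 1 else 0)"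
  proof (rule sum.cong[OF refl])
    fix u
    have "{x \<in> D3. x \<in> neighbors E u} = neighbors E u \<inter> D3" by auto
    then show "card (neighbors E u \<inter> D3) = (\<Sum>x\<in>D3. if x \<in> neighbors E u then 1 else 0)"
      using finA by (simp add: sum.inter_filter[symmetric])
  qed
  also have "\<dots> = (\<Sum>x\<in>D3. \<Sum>u\<in>A. if x \<in> neighbors E u then 1 else 0)" by (rule sum.swap)
  also have "\<dots> = (\<Sum>x\<in>D3. card (neighbors E x \<inter> A))"
  proof (rule sum.cong[OF refl])
    fix x
    have "{u \<in> A. x \<in> neighbors E u} = neighbors E x \<inter> A" using nb_sym by fast
    then show "(\<Sum>u\<in>A. if x \<in> neighbors E u then 1 else 0) = card (neighbors E x \<inter> A)"
      using finA by (simp add: sum.inter_filter[symmetric])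
  qed
  also have "\<dots> \<le> (\<Sum>x\<in>D3. 2 * tv E x)" by (rule sum_mono) (rule nbA_bound[OF sg A])
  also have "\<dots> = 2 * (\<Sum>x\<in>D3. tv E x)" by (simp add: sum_distrib_left)
  finally show ?thesis .
qed



definition kk :: "'a set set \<Rightarrow> 'a \<Rightarrow> nat" where
  "kk E u = (if degree E u = 2 then 3 * tv E u else if degree E u = 3 then tv E u else 0)"

lemma lc_eq:
  assumes sc: "subcubic V E" and u: "u \<in> V"
  shows "3 * local_clustering E u = real (kk E u)"
proof -
  have "degree E u \<le> 3" using sc u unfolding subcubic_def by auto
  then consider "degree E u < 2" | "degree E u = 2" | "degree E u = 3" by linarith
  then show ?thesis
  proof cases
    case 1 then show ?thesis unfolding local_clustering_def kk_def by auto
  next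
    case 2 then show ?thesis unfolding local_clustering_def kk_def tv_def by simp
  next
    case 3
    have "(3::nat) choose 2 = 3" by (simp add: numeral_3_eq_3 numeral_2_eq_2)
    then show ?thesis using 3 unfolding local_clustering_def kk_def tv_def by simp
  qed
qed

lemma pv:
  assumes sg: "simple_graph V E" and sc: "subcubic V E" and u: "u \<in> V"
    and A: "A = {u\<in>V. degree E u = 2 \<and> tv E u = 1}"
  shows "4 * kk E u + 7 * degree E u \<le> 21 + 4 * tv E u + (if u \<in> A then 1 else 0)"
    and "tv E u = (if degree E u = 3 then tv E u else 0) + (if u \<in> A then 1 else 0)"
proof -
  have le: "tv E u \<le> degree E u choose 2" using tv_le[OF sg] .
  have "degree E u \<le> 3" using sc u unfolding subcubic_def by auto
  then consider "degree E u = 0" | "degree E u = 1" | "degree E u = 2" | "degree E u = 3" by linarith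
  then have "4 * kk E u + 7 * degree E u \<le> 21 + 4 * tv E u + (if u \<in> A then 1 else 0) \<and>
     tv E u = (if degree E u = 3 then tv E u else 0) + (if u \<in> A then 1 else 0)"
  proof cases
    case 1 then show ?thesis using le A unfolding kk_def by (auto simp: numeral_2_eq_2)
  next
    case 2 then show ?thesis using le A unfolding kk_def by (auto simp: numeral_2_eq_2)
  next
    case 3
    then have "tv E u \<le> 1" using le by simp
    then show ?thesis using 3 A u unfolding kk_def by auto
  next
    case 4 then show ?thesis using A unfolding kk_def by auto
  qed
  then show "4 * kk E u + 7 * degree E u \<le> 21 + 4 * tv E u + (if u \<in> A then 1 else 0)"
    and "tv E u = (if degree E u = 3 then tv E u else 0) + (if u \<in> A then 1 else 0)" by auto
qed

lemma main_count:
  assumes sg: "simple_graph V E" and c: "connected_graph V E" and sc: "subcubic V E"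
    and n: "card V \<ge> 6"
  shows "4 * (\<Sum>u\<in>V. kk E u) \<le> 7 * card V + 14"
proof -
  define A where "A = {u\<in>V. degree E u = 2 \<and> tv E u = 1}"
  define D3 where "D3 = {x\<in>V. degree E x = 3}"
  have finV: "finite V" using sg unfolding simple_graph_def by auto
  have s1: "(\<Sum>u\<in>V. 4 * kk E u + 7 * degree E u) \<le> (\<Sum>u\<in>V. 21 + 4 * tv E u + (if u \<in> A then 1 else 0))"
    by (rule sum_mono) (rule pv(1)[OF sg sc _ A_def])
  have cA: "(\<Sum>u\<in>V. (if u \<in> A then 1 else 0)) = card A"
  proof -
    have "{u \<in> V. u \<in> A} = A" unfolding A_def by auto
    then show ?thesis using finV by (simp add: sum.inter_filter[symmetric])
  qed
  have cD: "(\<Sum>u\<in>V. (if degree E u = 3 then tv E u else 0)) = (\<Sum>x\<in>D3. tv E x)"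
    unfolding D3_def using finV by (simp add: sum.inter_filter)
  have T: "(\<Sum>u\<in>V. tv E u) = (\<Sum>x\<in>D3. tv E x) + card A"
  proof -
    have "(\<Sum>u\<in>V. tv E u) = (\<Sum>u\<in>V. (if degree E u = 3 then tv E u else 0) + (if u \<in> A then 1 else 0))"
      by (rule sum.cong[OF refl]) (rule pv(2)[OF sg sc _ A_def])
    also have "\<dots> = (\<Sum>x\<in>D3. tv E x) + card A" using cD cA by (simp add: sum.distrib)
    finally show ?thesis .
  qed
  have s1': "4 * (\<Sum>u\<in>V. kk E u) + 7 * (\<Sum>u\<in>V. degree E u) \<le> 21 * card V + 4 * (\<Sum>u\<in>V. tv E u) + card A"
    using s1 cA by (simp add: sum.distrib sum_distrib_left)
  have hs: "(\<Sum>u\<in>V. degree E u) = 2 * card E" using handshake[OF sg] .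
  have tb: "3 * card V + (\<Sum>v\<in>V. tv E v) \<le> 3 * card E + 3"
    using tri_bound[OF sg sc c _ order_refl c] n by simp
  have ab: "card A \<le> 2 * (\<Sum>x\<in>D3. tv E x)" using A_bound[OF sg sc c n A_def D3_def] .
  show ?thesis using s1' hs tb ab T by linarith
qed

lemma final_arith:
  fixes K n :: nat
  assumes k: "4 * K \<le> 7 * n + 14" and n: "n \<ge> 6"
  shows "real K / 3 / real n \<le> 7/12 +
    (if n mod 4 = 0 then 12 else if n mod 4 = 1 then 13
     else if n mod 4 = 2 then 14 else 11) / (12 * real n)"
proof -
  have np: "real n > 0" using n by simp
  have aux: "real K / 3 / real n \<le> 7/12 + c / (12 * real n)" if "4 * real K \<le> 7 * real n + c" for c
    using that np by (simp add: field_simps)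
  consider "n mod 4 = 0" | "n mod 4 = 1" | "n mod 4 = 2" | "n mod 4 = 3" by linarith
  then show ?thesis
  proof cases
    case 1
    then obtain q where q: "n = 4*q+0" by (metis div_mult_mod_eq mult.commute add_0_right)
    have "4*K \<le> 28*q+14" using k q by simp
    then have "K \<le> 7*q+3" by linarith
    then have "4 * K \<le> 7 * n + 12" using q by simp
    then have "4 * real K \<le> 7 * real n + 12" by linarith
    from aux[OF this] show ?thesis using 1 by simp
  next
    case 2
    then obtain q where q: "n = 4*q+1" by (metis div_mult_mod_eq mult.commute add_0_right)
    have "4*K \<le> 28*q+21" using k q by simp
    then have "K \<le> 7*q+5" by linarith
    then have "4 * K \<le> 7 * n + 13" using q by simp
    then have "4 * real K \<le> 7 * real n + 13" by linarith
    from aux[OF this] show ?thesis using 2 by simp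
  next
    case 3
    then have "4 * real K \<le> 7 * real n + 14" using k by linarith
    from aux[OF this] show ?thesis using 3 by simp
  next
    case 4
    then obtain q where q: "n = 4*q+3" by (metis div_mult_mod_eq mult.commute add_0_right)
    have "4*K \<le> 28*q+35" using k q by simp
    then have "K \<le> 7*q+8" by linarith
    then have "4 * K \<le> 7 * n + 11" using q by simp
    then have "4 * real K \<le> 7 * real n + 11" by linarith
    from aux[OF this] show ?thesis using 4 by simp
  qed
qed

theorem theorem2:
  fixes V :: "'a set" and E :: "'a set set"
  assumes "simple_graph V E" and "connected_graph V E" and "subcubic V E"
    and "card V \<ge> 6"
  shows "clustering V E \<le> 7/12 +
    (if card V mod 4 = 0 then 12 else if card V mod 4 = 1 then 13
     else if card V mod 4 = 2 then 14 else 11) / (12 * real (card V))"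
proof -
  have "(\<Sum>u\<in>V. local_clustering E u) = (\<Sum>u\<in>V. real (kk E u) / 3)"
  proof (rule sum.cong[OF refl])
    fix u assume "u \<in> V"
    then show "local_clustering E u = real (kk E u) / 3" using lc_eq[OF assms(3)] by fastforce
  qed
  also have "\<dots> = real (\<Sum>u\<in>V. kk E u) / 3" by (simp add: sum_divide_distrib)
  finally have S: "(\<Sum>u\<in>V. local_clustering E u) = real (\<Sum>u\<in>V. kk E u) / 3" .
  have eq: "clustering V E = real (\<Sum>u\<in>V. kk E u) / 3 / real (card V)"
    unfolding clustering_def S by (rule refl)
  show ?thesis unfolding eq by (rule final_arith[OF main_count[OF assms] assms(4)])
qed


end
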